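(* Let $q$ be a prime power and let $n,k,r$ be integers with $n\le q-1$, $0<r<k\le n$, $r\mid k$, $(r+1)\mid n$ and $(r+1)\mid(q-1)$. Write $m=k/r$ and $n=(m+\ell)(r+1)$ with an integer $\ell\ge 0$, so that $t:=n-k-m=\ell(r+1)$. Let $\omega$ be a primitive element of $\mathbb F_q$ and $\alpha=\omega^{(q-1)/(r+1)}$. For $0\le i\le m+\ell-1$ and $j\ge 0$ let $$\mathbf v^{(j)}_i=\big((\omega^i)^j,(\omega^i\alpha)^j,\dots,(\omega^i\alpha^r)^j\big)\in\mathbb F_q^{r+1},$$ and let $\mathbf V^{(j)}=(\mathbf v^{(j)}_0,\dots,\mathbf v^{(j)}_{m+\ell-1})\in\mathbb F_q^n$. Let $\mathbf H$ be the $(m+\ell+\ell r)\times n$ matrix whose rows are: - the $m+\ell$ vectors $\mathbf e_b\in\mathbb F_q^n$ ($0\le b\le m+\ell-1$), where $\mathbf e_b$ has entries $1$ in coordinates $b(r+1),\dots,b(r+1)+r$ and $0$ elsewhere; - the $\ell r$ vectors $\mathbf V^{(j)}$ for $1\le j\le \ell(r+1)-1$ with $(r+1)\nmid j$. Then $\mathbf H$ has full rank $m+\ell+\ell r$. Moreover, the code $\mathcal C=\{\mathbf c\in\mathbb F_q^n:\mathbf H\mathbf c^{T}=\mathbf 0\}$ is a linear $[n,k,t+2]$ code. For every codeword $\mathbf c$ and every $b$, the sum of the coordinates of $\mathbf c$ in the group $\{b(r+1),\dots,b(r+1)+r\}$ is $0$; hence $\mathcal C$ has addition based repair and all-symbol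 locality $r$.
   Context: A linear code has addition based repair if every coordinate (node) $i$ has a set $J_i$ of other coordinates with $c_i=-\sum_{j\in J_i}c_j$ for all codewords $\mathbf c$. It has all-symbol locality $r$ if every node can be recovered, for all codewords, as a function of at most $r$ other nodes. *)

theory Defs
  imports Main HOL.Vector_Spaces "HOL-Library.Function_Algebras" "HOL-Library.Cardinality"
begin

text \<open>Vectors of F_q^n are represented as functions nat => 'a that vanish outside {0..<n}.\<close>

definition fscale :: "'a::field \<Rightarrow> (nat \<Rightarrow> 'a) \<Rightarrow> (nat \<Rightarrow> 'a)" where
  "fscale c v = (\<lambda>i. c * v i)"

definition vdim :: "(nat \<Rightarrow> 'a::field) set \<Rightarrow> nat" where
  "vdim S = vector_space.dim fscale S"

definition vsubspace :: "(nat \<Rightarrow> 'a::field) set \<Rightarrow> bool" where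
  "vsubspace S = module.subspace fscale S"

definition hweight :: "nat \<Rightarrow> (nat \<Rightarrow> 'a::zero) \<Rightarrow> nat" where
  "hweight n c = card {i. i < n \<and> c i \<noteq> 0}"

definition min_dist :: "nat \<Rightarrow> (nat \<Rightarrow> 'a::zero) set \<Rightarrow> nat" where
  "min_dist n C = Min {hweight n c | c. c \<in> C \<and> c \<noteq> 0}"

definition linear_code :: "nat \<Rightarrow> nat \<Rightarrow> nat \<Rightarrow> (nat \<Rightarrow> 'a::field) set \<Rightarrow> bool" where
  "linear_code n k d C \<longleftrightarrow>
     vsubspace C \<and> (\<forall>c\<in>C. \<forall>i\<ge>n. c i = 0) \<and> vdim C = k \<and> min_dist n C = d"

definition addition_based_repair :: "nat \<Rightarrow> (nat \<Rightarrow> 'a::ab_group_add) set \<Rightarrow> bool" where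
  "addition_based_repair n C \<longleftrightarrow>
     (\<forall>i<n. \<exists>J. J \<subseteq> {..<n} - {i} \<and> (\<forall>c\<in>C. c i = - (\<Sum>j\<in>J. c j)))"

definition all_symbol_locality :: "nat \<Rightarrow> nat \<Rightarrow> (nat \<Rightarrow> 'a::zero) set \<Rightarrow> bool" where
  "all_symbol_locality n r C \<longleftrightarrow>
     (\<forall>i<n. \<exists>R f. R \<subseteq> {..<n} - {i} \<and> card R \<le> r \<and>
        (\<forall>c\<in>C. c i = f (\<lambda>j. if j \<in> R then c j else 0)))"

definition primitive_elem :: "'a::{finite,field} \<Rightarrow> bool" where
  "primitive_elem w \<longleftrightarrow> (\<forall>x. x \<noteq> 0 \<longrightarrow> (\<exists>i::nat. x = w ^ i))"

text \<open>The row vectors of H. Coordinate p = i(r+1)+s corresponds to evaluation point w^i alpha^s.\<close>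
definition Vrow :: "'a::field \<Rightarrow> 'a \<Rightarrow> nat \<Rightarrow> nat \<Rightarrow> nat \<Rightarrow> (nat \<Rightarrow> 'a)" where
  "Vrow w a r n j = (\<lambda>p. if p < n then (w ^ (p div (r+1)) * a ^ (p mod (r+1))) ^ j else 0)"

definition erow :: "nat \<Rightarrow> nat \<Rightarrow> nat \<Rightarrow> (nat \<Rightarrow> 'a::{zero,one})" where
  "erow r n b = (\<lambda>p. if p < n \<and> b*(r+1) \<le> p \<and> p \<le> b*(r+1) + r then 1 else 0)"

definition Hrows :: "'a::field \<Rightarrow> 'a \<Rightarrow> nat \<Rightarrow> nat \<Rightarrow> nat \<Rightarrow> nat \<Rightarrow> (nat \<Rightarrow> 'a) list" where
  "Hrows w a r n m l =
     map (erow r n) [0..<m+l] @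
     map (Vrow w a r n) (filter (\<lambda>j. \<not> (r+1) dvd j) [1..<l*(r+1)])"

definition code_of :: "nat \<Rightarrow> (nat \<Rightarrow> 'a::comm_ring) list \<Rightarrow> (nat \<Rightarrow> 'a) set" where
  "code_of n H = {c. (\<forall>i\<ge>n. c i = 0) \<and> (\<forall>h\<in>set H. (\<Sum>i<n. h i * c i) = 0)}"

end

theory Submission
  imports Defs "HOL-Computational_Algebra.Polynomial"
begin


lemma fscale_vs: "vector_space (fscale :: 'a::field \<Rightarrow> (nat \<Rightarrow> 'a) \<Rightarrow> (nat \<Rightarrow> 'a))"
  by unfold_locales (auto simp: fscale_def fun_eq_iff algebra_simps)

interpretation V: vector_space "fscale :: 'a::field \<Rightarrow> (nat \<Rightarrow> 'a) \<Rightarrow> (nat \<Rightarrow> 'a)"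
  by (rule fscale_vs)

lemma sum_fun_apply: "(sum f A) p = (\<Sum>a\<in>A. f a p)"
  by (induction A rule: infinite_finite_induct) auto

definition Fn :: "nat \<Rightarrow> (nat \<Rightarrow> 'a::field) set" where
  "Fn n = {c. \<forall>i\<ge>n. c i = 0}"

definition delta :: "nat \<Rightarrow> nat \<Rightarrow> 'a::field" where
  "delta i = (\<lambda>p. if p = i then 1 else 0)"

definition ortho :: "nat \<Rightarrow> (nat \<Rightarrow> 'a::field) \<Rightarrow> (nat \<Rightarrow> 'a) \<Rightarrow> 'a" where
  "ortho n h c = (\<Sum>i<n. h i * c i)"

lemma sum_delta_mult: "finite A \<Longrightarrow> (\<Sum>a\<in>A. g a * (if p = a then (1::'a::semiring_1) else 0)) = (if p \<in> A then g p else 0)"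
proof -
  assume "finite A"
  have "(\<Sum>a\<in>A. g a * (if p = a then (1::'a) else 0)) = (\<Sum>a\<in>A. if p = a then g a else 0)"
    by (rule sum.cong) auto
  then show ?thesis using \<open>finite A\<close> by (simp add: sum.delta)
qed

lemma ortho_lin: "ortho n h (x - fscale a y) = ortho n h x - a * ortho n h y"
  by (simp add: ortho_def fscale_def right_diff_distrib sum_subtractf sum_distrib_left mult.left_commute)

lemma Fn_subspace: "V.subspace (Fn n)"
  by (auto simp: V.subspace_def Fn_def fscale_def)

lemma ortho_subspace: "V.subspace {c. ortho n h c = 0}"
  by (auto simp: V.subspace_def ortho_def fscale_def algebra_simps sum.distrib
      sum_distrib_left[symmetric] mult.left_commute[of _ "_::'a"])

lemma ortho_subspace_h: "V.subspace {h. ortho n h c = 0}"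
  by (auto simp: V.subspace_def ortho_def fscale_def algebra_simps sum.distrib
      sum_distrib_left[symmetric])

lemma Fn_span: "Fn n \<subseteq> V.span (delta ` {..<n})"
proof
  fix c :: "nat \<Rightarrow> 'a" assume c: "c \<in> Fn n"
  have "c = (\<Sum>i<n. fscale (c i) (delta i))"
  proof
    fix p
    show "c p = (\<Sum>i<n. fscale (c i) (delta i)) p"
      using c by (auto simp: sum_fun_apply fscale_def delta_def Fn_def sum_delta_mult)
  qed
  also have "\<dots> \<in> V.span (delta ` {..<n})"
    by (intro V.span_sum V.span_scale V.span_base) auto
  finally show "c \<in> V.span (delta ` {..<n})" .
qed

lemma indep_fin:
  assumes "B \<subseteq> Fn n" "V.independent (B :: (nat \<Rightarrow> 'a::field) set)"
  shows "finite B \<and> card B \<le> n"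
proof -
  have "finite B \<and> card B \<le> card (delta ` {..<n} :: (nat \<Rightarrow> 'a) set)"
    using assms Fn_span by (intro V.independent_span_bound) auto
  moreover have "card (delta ` {..<n} :: (nat \<Rightarrow> 'a) set) \<le> n"
    using card_image_le[of "{..<n}" delta] by simp
  ultimately show ?thesis by simp
qed

lemma delta_inj: "inj (delta :: nat \<Rightarrow> nat \<Rightarrow> 'a::field)"
  by (auto simp: inj_def delta_def fun_eq_iff split: if_splits)

lemma dim_Fn: "V.dim (Fn n :: (nat \<Rightarrow> 'a::field) set) = n"
proof -
  have ind: "V.independent (delta ` {..<n} :: (nat \<Rightarrow> 'a) set)"
  proof (rule V.independent_if_scalars_zero)
    fix f :: "(nat \<Rightarrow> 'a) \<Rightarrow> 'a" and x :: "nat \<Rightarrow> 'a"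
    assume s: "(\<Sum>x\<in>delta ` {..<n}. fscale (f x) x) = (0 :: nat \<Rightarrow> 'a)" and x: "x \<in> delta ` {..<n}"
    then obtain i where i: "i < n" "x = delta i" by auto
    have "(\<Sum>x\<in>delta ` {..<n}. fscale (f x) x) i = (\<Sum>j<n. fscale (f (delta j)) (delta j :: nat \<Rightarrow> 'a)) i"
      by (subst sum.reindex) (auto intro: inj_on_subset[OF delta_inj])
    also have "\<dots> = f (delta i)"
      using i by (simp add: sum_fun_apply fscale_def delta_def sum_delta_mult)
    finally show "f x = 0" using s i by simp
  qed auto
  have "card (delta ` {..<n} :: (nat \<Rightarrow> 'a) set) = V.dim (Fn n :: (nat \<Rightarrow> 'a) set)"
    using ind Fn_span by (intro V.basis_card_eq_dim) (auto simp: Fn_def delta_def)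
  moreover have "card (delta ` {..<n} :: (nat \<Rightarrow> 'a) set) = n"
    by (subst card_image) (auto intro: inj_on_subset[OF delta_inj])
  ultimately show ?thesis by simp
qed

lemma dim_le_basis:
  assumes "W \<subseteq> Fn n"
  obtains B where "B \<subseteq> W" "V.independent B" "W \<subseteq> V.span B" "card B = V.dim W" "finite B"
proof -
  obtain B where "B \<subseteq> W" "V.independent B" "W \<subseteq> V.span B" "card B = V.dim W"
    using V.basis_exists by blast
  moreover have "finite B" using indep_fin[of B n] assms calculation by auto
  ultimately show ?thesis using that by blast
qed

lemma dim_mono_Fn:
  assumes "W \<subseteq> U" "U \<subseteq> Fn n"
  shows "V.dim W \<le> V.dim U"
proof -
  obtain B where "B \<subseteq> U" "V.independent B" "U \<subseteq> V.span B" "card B = V.dim U" "finite B"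
    using dim_le_basis[OF assms(2)] by blast
  then show ?thesis using assms V.dim_le_card[of W B] by auto
qed

lemma L1:
  assumes W: "V.subspace W" "W \<subseteq> Fn n"
  shows "V.dim W \<le> V.dim (W \<inter> {c. ortho n h c = 0}) + 1"
proof (cases "W \<subseteq> {c. ortho n h c = 0}")
  case True
  then show ?thesis by (simp add: Int_absorb2)
next
  case False
  then obtain b0 where b0: "b0 \<in> W" "ortho n h b0 \<noteq> 0" by auto
  let ?W' = "W \<inter> {c. ortho n h c = 0}"
  obtain B where B: "B \<subseteq> ?W'" "V.independent B" "?W' \<subseteq> V.span B" "card B = V.dim ?W'" "finite B"
    using dim_le_basis[of ?W' n] W by blast
  have "W \<subseteq> V.span (insert b0 B)"
  proof
    fix x assume x: "x \<in> W"
    define a where "a = ortho n h x / ortho n h b0"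
    have "x - fscale a b0 \<in> ?W'"
    proof
      show "x - fscale a b0 \<in> W" using x b0 W(1) by (intro V.subspace_diff V.subspace_scale) auto
      show "x - fscale a b0 \<in> {c. ortho n h c = 0}"
        using b0 by (simp add: ortho_lin a_def)
    qed
    then have "x - fscale a b0 \<in> V.span (insert b0 B)"
      using B V.span_mono[of B "insert b0 B"] by blast
    moreover have "fscale a b0 \<in> V.span (insert b0 B)"
      by (intro V.span_scale V.span_base) auto
    ultimately have "(x - fscale a b0) + fscale a b0 \<in> V.span (insert b0 B)"
      by (rule V.span_add)
    then show "x \<in> V.span (insert b0 B)" by simp
  qed
  then have "V.dim W \<le> card (insert b0 B)" using B by (intro V.dim_le_card) auto
  also have "\<dots> \<le> card B + 1" using B by (simp add: card_insert_if)
  finally show ?thesis using B by simp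
qed

definition conds :: "nat \<Rightarrow> (nat \<Rightarrow> 'a::field) set \<Rightarrow> (nat \<Rightarrow> 'a) set" where
  "conds n S = {c. \<forall>h\<in>S. ortho n h c = 0}"

lemma conds_subspace: "V.subspace (conds n S)"
  by (auto simp: V.subspace_def conds_def ortho_def fscale_def algebra_simps sum.distrib
      sum_distrib_left[symmetric] mult.left_commute[of _ "_::'a"])

lemma L2:
  assumes "finite S" "V.subspace W" "W \<subseteq> Fn n"
  shows "V.dim W \<le> V.dim (W \<inter> conds n S) + card S"
  using assms(1)
proof (induction S rule: finite_induct)
  case empty
  then show ?case by (simp add: conds_def)
next
  case (insert h S)
  let ?U = "W \<inter> conds n S"
  have U: "V.subspace ?U" "?U \<subseteq> Fn n"
    using assms conds_subspace V.subspace_inter[OF assms(2) conds_subspace] by auto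
  have eq: "W \<inter> conds n (insert h S) = ?U \<inter> {c. ortho n h c = 0}"
    by (auto simp: conds_def)
  have "V.dim ?U \<le> V.dim (W \<inter> conds n (insert h S)) + 1"
    using L1[OF U, of h] eq by simp
  then show ?case using insert by simp
qed



lemma card_nonzero: "card {x::'a::{finite,field}. x \<noteq> 0} = CARD('a) - 1"
proof -
  have "{x::'a. x \<noteq> 0} = UNIV - {0}" by auto
  then show ?thesis by (simp add: card_Diff_singleton)
qed

lemma prim_nonzero:
  assumes "primitive_elem (w::'a::{finite,field})" "CARD('a) \<ge> 3"
  shows "w \<noteq> 0"
proof
  assume w0: "w = 0"
  have "{x::'a. x \<noteq> 0} \<subseteq> {1}"
  proof
    fix x :: 'a assume "x \<in> {x. x \<noteq> 0}"
    then obtain i where "x = w ^ i" "x \<noteq> 0" using assms(1) unfolding primitive_elem_def by auto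
    then show "x \<in> {1}" using w0 by (cases i) simp_all
  qed
  then have "card {x::'a. x \<noteq> 0} \<le> card {1::'a}" by (intro card_mono) simp_all
  then have "card {x::'a. x \<noteq> 0} \<le> 1" by simp
  then show False using card_nonzero[where 'a='a] assms(2) by simp
qed

lemma prim_inj:
  assumes "primitive_elem (w::'a::{finite,field})" "w \<noteq> 0"
  shows "inj_on (\<lambda>e. w ^ e) {..<CARD('a) - 1}"
proof (rule ccontr)
  assume "\<not> ?thesis"
  then obtain a0 b0 where ab0: "a0 < CARD('a) - 1" "b0 < CARD('a) - 1" "w ^ a0 = w ^ b0" "a0 \<noteq> b0"
    unfolding inj_on_def by auto
  define a where "a = min a0 b0"
  define b where "b = max a0 b0"
  have ab: "a < b" "b < CARD('a) - 1" "w ^ a = w ^ b"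
    using ab0 by (auto simp: a_def b_def min_def max_def)
  define g where "g = b - a"
  have "a + g = b" using ab by (simp add: g_def)
  then have "w ^ b = w ^ a * w ^ g" by (metis power_add)
  then have wg: "w ^ g = 1" using ab assms(2) by simp
  have g: "0 < g" "g < CARD('a) - 1" using ab by (auto simp: g_def)
  have pm: "w ^ i = w ^ (i mod g)" for i
  proof -
    have "w ^ i = w ^ (g * (i div g) + i mod g)" by simp
    also have "\<dots> = (w ^ g) ^ (i div g) * w ^ (i mod g)" by (simp only: power_add power_mult)
    finally show ?thesis by (simp only: wg power_one mult_1)
  qed
  have "{x::'a. x \<noteq> 0} \<subseteq> (\<lambda>i. w ^ i) ` {..<g}"
  proof
    fix x :: 'a assume "x \<in> {x. x \<noteq> 0}"
    then obtain i where "x = w ^ i" using assms(1) unfolding primitive_elem_def by auto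
    then show "x \<in> (\<lambda>i. w ^ i) ` {..<g}" using pm[of i] g by auto
  qed
  then have "card {x::'a. x \<noteq> 0} \<le> card ((\<lambda>i. w ^ i) ` {..<g})" by (intro card_mono) simp_all
  also have "\<dots> \<le> g" using card_image_le[of "{..<g}" "\<lambda>i. w ^ i"] by simp
  finally have "card {x::'a. x \<noteq> 0} \<le> g" .
  then show False using card_nonzero[where 'a='a] g by simp
qed

lemma prim_pow:
  assumes "primitive_elem (w::'a::{finite,field})" "w \<noteq> 0"
  shows "w ^ (CARD('a) - 1) = 1"
proof -
  let ?q = "CARD('a) - 1"
  have im: "(\<lambda>e. w ^ e) ` {..<?q} \<subseteq> {x. x \<noteq> 0}" using assms(2) by auto
  have c1: "card ((\<lambda>e. w ^ e) ` {..<?q}) = ?q"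
    using card_image[OF prim_inj[OF assms]] by simp
  have "card ((\<lambda>e. w ^ e) ` {..<?q}) = card {x::'a. x \<noteq> 0}"
    unfolding c1 card_nonzero ..
  then have eq: "(\<lambda>e. w ^ e) ` {..<?q} = {x. x \<noteq> 0}"
    using im by (intro card_subset_eq) simp_all
  have "w ^ ?q \<in> {x. x \<noteq> 0}" using assms(2) by simp
  then have "w ^ ?q \<in> (\<lambda>e. w ^ e) ` {..<?q}" unfolding eq .
  then obtain i where i: "i < ?q" "w ^ ?q = w ^ i" by blast
  show ?thesis
  proof (cases "i = 0")
    case True then show ?thesis using i by simp
  next
    case False
    have "i + (?q - i) = ?q" using i by simp
    then have "w ^ ?q = w ^ i * w ^ (?q - i)" by (metis power_add)
    then have "w ^ (?q - i) = w ^ 0" using i assms(2) by simp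
    moreover have "?q - i \<in> {..<?q}" "0 \<in> {..<?q}" using False i by auto
    ultimately have "?q - i = 0" by (rule inj_onD[OF prim_inj[OF assms]])
    then show ?thesis using i False by simp
  qed
qed

lemma vandermonde_zero:
  fixes c x :: "nat \<Rightarrow> 'a::field"
  assumes inj: "inj_on x {..<n}"
    and sums: "\<And>j. j \<le> t \<Longrightarrow> (\<Sum>p<n. c p * x p ^ j) = 0"
    and card: "card {p. p < n \<and> c p \<noteq> 0} \<le> t + 1"
  shows "\<forall>p<n. c p = 0"
proof (rule ccontr)
  assume "\<not> ?thesis"
  then obtain p0 where p0: "p0 < n" "c p0 \<noteq> 0" by auto
  define S where "S = {p. p < n \<and> c p \<noteq> 0}"
  have finS: "finite S" by (simp add: S_def)
  have p0S: "p0 \<in> S" using p0 by (simp add: S_def)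
  define f where "f = (\<Prod>q\<in>S - {p0}. [:- x q, 1:])"
  have degf: "degree f = card (S - {p0})"
    unfolding f_def by (subst degree_prod_eq_sum_degree) auto
  have degt: "degree f \<le> t"
    using degf card p0S finS by (simp add: S_def[symmetric])
  have pf: "poly f y = (\<Prod>q\<in>S - {p0}. y - x q)" for y
    by (simp add: f_def poly_prod)
  have "(\<Sum>p<n. c p * poly f (x p)) = (\<Sum>p<n. \<Sum>j\<le>degree f. c p * (coeff f j * x p ^ j))"
    by (simp add: poly_altdef sum_distrib_left)
  also have "\<dots> = (\<Sum>j\<le>degree f. coeff f j * (\<Sum>p<n. c p * x p ^ j))"
    by (subst sum.swap) (simp add: sum_distrib_left mult.left_commute)
  also have "\<dots> = 0" using sums degt by simp
  finally have z: "(\<Sum>p<n. c p * poly f (x p)) = 0" .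
  have "(\<Sum>p<n. c p * poly f (x p)) = (\<Sum>p\<in>S. c p * poly f (x p))"
    by (rule sum.mono_neutral_right) (auto simp: S_def)
  also have "\<dots> = c p0 * poly f (x p0) + (\<Sum>p\<in>S - {p0}. c p * poly f (x p))"
    using finS p0S by (simp add: sum.remove)
  also have "(\<Sum>p\<in>S - {p0}. c p * poly f (x p)) = 0"
  proof (rule sum.neutral, rule ballI)
    fix p assume "p \<in> S - {p0}"
    then have "poly f (x p) = 0" unfolding pf using finS
      by (intro prod_zero) auto
    then show "c p * poly f (x p) = 0" by simp
  qed
  finally have "c p0 * poly f (x p0) = 0" using z by simp
  moreover have "poly f (x p0) \<noteq> 0"
    unfolding pf using finS inj p0 by (auto simp: S_def inj_on_def)
  ultimately show False using p0 by simp
qed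



lemma sum_groups:
  fixes g :: "nat \<Rightarrow> 'b::comm_monoid_add"
  shows "(\<Sum>p<N*(r+1). g p) = (\<Sum>b<N. \<Sum>p\<in>{b*(r+1)..b*(r+1)+r}. g p)"
proof (induction N)
  case 0 then show ?case by simp
next
  case (Suc N)
  have e: "Suc N * (r+1) = N*(r+1) + (r+1)" by simp
  have "(\<Sum>p<Suc N*(r+1). g p) = (\<Sum>p<N*(r+1) + (r+1). g p)" unfolding e ..
  also have "\<dots> = (\<Sum>p<N*(r+1). g p) + (\<Sum>p=N*(r+1)..<N*(r+1)+(r+1). g p)"
    using sum.atLeastLessThan_concat[of 0 "N*(r+1)" "N*(r+1)+(r+1)" g] by (simp add: atLeast0LessThan)
  also have "{N*(r+1)..<N*(r+1)+(r+1)} = {N*(r+1)..N*(r+1)+r}" by auto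
  finally show ?case using Suc by simp
qed

lemma ortho_delta: "p < n \<Longrightarrow> ortho n (delta p) c = c p"
proof -
  assume p: "p < n"
  have "ortho n (delta p) c = (\<Sum>i<n. if p = i then c i else 0)"
    unfolding ortho_def delta_def by (rule sum.cong) auto
  then show ?thesis using p by (simp add: sum.delta)
qed

lemma dim_zero_set: "W \<subseteq> {0} \<Longrightarrow> V.dim W = 0"
proof -
  assume "W \<subseteq> {0}"
  then have "W \<subseteq> V.span {}" by auto
  then show ?thesis using V.dim_le_card[of W "{}"] by simp
qed

lemma filter_len: "length (filter (\<lambda>j. \<not> (r+1) dvd j) [0..<l*(r+1)]) = l * r"
proof (induction l)
  case 0 then show ?case by simp
next
  case (Suc l)
  let ?a = "l*(r+1)"
  have e: "Suc l * (r+1) = ?a + (r+1)" by simp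
  have "[0..<Suc l*(r+1)] = [0..<?a] @ [?a..<?a+(r+1)]"
    unfolding e by (rule upt_add_eq_append) simp
  moreover have "[?a..<?a+(r+1)] = ?a # [Suc ?a..<Suc ?a + r]"
    by (simp add: upt_rec)
  moreover have "filter (\<lambda>j. \<not> (r+1) dvd j) [Suc ?a..<Suc ?a + r] = [Suc ?a..<Suc ?a + r]"
  proof (rule filter_True, rule ballI)
    fix x assume "x \<in> set [Suc ?a..<Suc ?a + r]"
    define s where "s = x - ?a"
    have s: "x = ?a + s" "0 < s" "s < r + 1" using \<open>x \<in> _\<close> by (auto simp: s_def)
    show "\<not> (r+1) dvd x"
    proof
      assume "(r+1) dvd x"
      then have "(r+1) dvd ?a + s" using s(1) by simp
      then have "(r+1) dvd s" using dvd_add_right_iff[of "r+1" ?a s] dvd_triv_right[of "r+1" l] by blast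
      then show False using s by (auto dest: dvd_imp_le)
    qed
  qed
  moreover have "(r+1) dvd ?a" by (rule dvd_triv_right)
  ultimately show ?case using Suc by (simp del: upt_Suc)
qed

lemma filter_len1: "length (filter (\<lambda>j. \<not> (r+1) dvd j) [1..<l*(r+1)]) = l * r"
proof (cases "l = 0")
  case True then show ?thesis by simp
next
  case False
  then have "[0..<l*(r+1)] = 0 # [1..<l*(r+1)]" by (simp add: upt_rec)
  then show ?thesis using filter_len[of r l] by simp
qed

lemma card_nonlast:
  assumes "e \<le> r" "0 < r"
  shows "card {p. p < a*(r+1)+e \<and> p mod (r+1) \<noteq> r} \<le> a*r+e"
proof -
  let ?g = "\<lambda>q::nat. (q div r)*(r+1) + q mod r"
  have "{p. p < a*(r+1)+e \<and> p mod (r+1) \<noteq> r} \<subseteq> ?g ` {..<a*r+e}"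
  proof
    fix p assume "p \<in> {p. p < a*(r+1)+e \<and> p mod (r+1) \<noteq> r}"
    then have p: "p < a*(r+1)+e" "p mod (r+1) \<noteq> r" by auto
    define u where "u = p div (r+1)"
    define v where "v = p mod (r+1)"
    have pv: "p = u*(r+1) + v" unfolding u_def v_def by (rule div_mult_mod_eq[symmetric])
    have vr: "v < r" using p(2) unfolding v_def
      by (metis less_Suc_eq mod_less_divisor Suc_eq_plus1 zero_less_Suc)
    define q where "q = u*r + v"
    have qd: "q div r = u" using vr assms by (simp add: q_def)
    have qm: "q mod r = v" using vr by (simp add: q_def)
    have "u \<le> a"
    proof (rule ccontr)
      assume "\<not> u \<le> a"
      then have "(a+1)*(r+1) \<le> u*(r+1)" by (intro mult_le_mono1) simp
      then show False using p(1) pv assms(1) by simp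
    qed
    have "q < a*r+e"
    proof (cases "u = a")
      case True
      then have "v < e" using p(1) pv by simp
      then show ?thesis using True by (simp add: q_def)
    next
      case False
      then have "u + 1 \<le> a" using \<open>u \<le> a\<close> by simp
      then have "(u+1)*r \<le> a*r" by (intro mult_le_mono1)
      then show ?thesis using vr by (simp add: q_def)
    qed
    moreover have "p = ?g q" using qd qm pv by simp
    ultimately show "p \<in> ?g ` {..<a*r+e}" by auto
  qed
  then have "card {p. p < a*(r+1)+e \<and> p mod (r+1) \<noteq> r} \<le> card (?g ` {..<a*r+e})"
    by (intro card_mono) auto
  also have "\<dots> \<le> a*r+e" using card_image_le[of "{..<a*r+e}" ?g] by simp
  finally show ?thesis .
qed



locale csetup =
  fixes w :: "'a::{finite,field}" and n k r l m :: nat and \<alpha> :: 'a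
  assumes n_le: "n \<le> CARD('a) - 1"
    and r_pos: "0 < r" and rk: "r < k" and kn: "k \<le> n"
    and rdk: "r dvd k" and r1q: "(r+1) dvd (CARD('a) - 1)"
    and n_eq: "n = (m + l) * (r+1)" and m_def: "m = k div r"
    and prim: "primitive_elem w"
    and alpha_def: "\<alpha> = w ^ ((CARD('a) - 1) div (r+1))"
begin

definition "H = Hrows w \<alpha> r n m l"
definition "CC = code_of n H"
definition "t = l * (r+1)"
definition "NN = m + l + l * r"
definition "xp p = w ^ (p div (r+1)) * \<alpha> ^ (p mod (r+1))"
definition "d = (CARD('a) - 1) div (r+1)"
definition "G b = {b*(r+1)..b*(r+1)+r}"

lemma k_eq: "k = m * r" using rdk by (simp add: m_def)

lemma m_ge: "2 \<le> m"
proof (rule ccontr)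
  assume "\<not> 2 \<le> m"
  then have "m * r \<le> 1 * r" by (intro mult_le_mono1) simp
  then show False using rk k_eq by simp
qed

lemma n_kN: "n = k + NN"
  by (simp add: n_eq k_eq NN_def algebra_simps)

lemma t_eq: "t = n - k - m"
proof -
  have "n = t + k + m" by (simp add: n_eq k_eq t_def algebra_simps)
  then show ?thesis by arith
qed

lemma card_ge3: "3 \<le> CARD('a)"
proof -
  have "2 * 2 \<le> m * (r + 1)" using m_ge r_pos by (intro mult_le_mono) auto
  also have "\<dots> \<le> (m + l) * (r + 1)" by (intro mult_le_mono1) simp
  also have "\<dots> = n" by (simp add: n_eq)
  finally show ?thesis using n_le by simp
qed

lemma w_nz: "w \<noteq> 0" using prim_nonzero[OF prim card_ge3] .

lemma q_eq: "CARD('a) - 1 = d * (r+1)" unfolding d_def using r1q by (metis dvd_div_mult_self)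

lemma alpha_d: "\<alpha> = w ^ d" by (simp add: alpha_def d_def)

lemma alpha_pow: "\<alpha> ^ (r+1) = 1"
proof -
  have "\<alpha> ^ (r+1) = w ^ (d * (r+1))" by (simp only: alpha_d power_mult)
  also have "\<dots> = 1" using prim_pow[OF prim w_nz] q_eq by simp
  finally show ?thesis .
qed

lemma ml_le_d: "m + l \<le> d"
proof -
  have F: "(m + l) * (r+1) \<le> d * (r+1)" using n_le unfolding q_eq n_eq .
  show ?thesis by (rule mult_right_le_imp_le[OF F]) simp
qed

lemma xp_inj: "inj_on xp {..<n}"
proof -
  define e where "e p = p div (r+1) + d * (p mod (r+1))" for p
  have xe: "xp p = w ^ e p" for p
    unfolding xp_def e_def by (simp only: alpha_d power_add power_mult)
  have ediv: "p < n \<Longrightarrow> p div (r+1) < d" for p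
  proof -
    assume "p < n"
    then have "p div (r+1) < m + l" using n_eq by (simp add: less_mult_imp_div_less)
    then show ?thesis using ml_le_d by simp
  qed
  have elt: "p < n \<Longrightarrow> e p < CARD('a) - 1" for p
  proof -
    assume p: "p < n"
    have le: "d * (p mod (r+1)) \<le> d * r" by (intro mult_le_mono2) (simp add: less_Suc_eq_le)
    have "e p < d + d * r" unfolding e_def using ediv[OF p] le by linarith
    then show ?thesis using q_eq by (simp add: algebra_simps)
  qed
  have einj: "inj_on e {..<n}"
  proof
    fix p p' assume pp: "p \<in> {..<n}" "p' \<in> {..<n}" "e p = e p'"
    have "e p mod d = p div (r+1)" "e p div d = p mod (r+1)"
      using ediv[of p] pp(1) by (simp_all add: e_def)
    moreover have "e p' mod d = p' div (r+1)" "e p' div d = p' mod (r+1)"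
      using ediv[of p'] pp(2) by (simp_all add: e_def)
    ultimately have "p div (r+1) = p' div (r+1)" "p mod (r+1) = p' mod (r+1)" using pp(3) by auto
    then show "p = p'" by (metis div_mult_mod_eq)
  qed
  show ?thesis
  proof
    fix p p' assume pp: "p \<in> {..<n}" "p' \<in> {..<n}" "xp p = xp p'"
    have "e p = e p'"
      using inj_onD[OF prim_inj[OF prim w_nz], of "e p" "e p'"] pp elt xe by auto
    then show "p = p'" using inj_onD[OF einj] pp by auto
  qed
qed


lemma CC_eq: "CC = Fn n \<inter> conds n (set H)"
  by (auto simp: CC_def code_of_def Fn_def conds_def ortho_def)

lemma CC_sub: "V.subspace CC"
  unfolding CC_eq by (rule V.subspace_inter[OF Fn_subspace conds_subspace])

lemma CC_Fn: "CC \<subseteq> Fn n" unfolding CC_eq by auto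

lemma G_sub: "b < m + l \<Longrightarrow> G b \<subseteq> {..<n}"
proof -
  assume b: "b < m + l"
  have "(b+1)*(r+1) \<le> (m+l)*(r+1)" using b by (intro mult_le_mono1) simp
  then show ?thesis by (auto simp: G_def n_eq)
qed

lemma erow_in: "b < m + l \<Longrightarrow> erow r n b \<in> set H"
  by (simp add: H_def Hrows_def)

lemma ortho_erow: "b < m + l \<Longrightarrow> ortho n (erow r n b) c = sum c (G b)"
proof -
  assume b: "b < m + l"
  have "ortho n (erow r n b) c = (\<Sum>p<n. if p \<in> G b then c p else 0)"
    unfolding ortho_def erow_def G_def by (rule sum.cong) auto
  also have "\<dots> = sum c (G b)"
    using G_sub[OF b] by (simp add: sum.If_cases Int_absorb1)
  finally show ?thesis .
qed

lemma grp: "c \<in> CC \<Longrightarrow> b < m + l \<Longrightarrow> sum c (G b) = 0"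
proof -
  assume c: "c \<in> CC" and b: "b < m + l"
  have "ortho n (erow r n b) c = 0" using erow_in[OF b] c unfolding CC_eq conds_def by blast
  then show ?thesis using ortho_erow[OF b, of c] by simp
qed

lemma Vrow_in: "\<not> (r+1) dvd j \<Longrightarrow> 1 \<le> j \<Longrightarrow> j < t \<Longrightarrow> Vrow w \<alpha> r n j \<in> set H"
  by (simp add: H_def Hrows_def t_def)

lemma pows:
  assumes c: "c \<in> CC" and j: "j \<le> t"
  shows "(\<Sum>p<n. c p * xp p ^ j) = 0"
proof (cases "(r+1) dvd j")
  case False
  then have j1: "1 \<le> j" by (cases j) auto
  have "(r+1) dvd t" unfolding t_def by (rule dvd_triv_right)
  then have "j \<noteq> t" using False by metis
  then have "Vrow w \<alpha> r n j \<in> set H" using Vrow_in[OF False j1] j by simp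
  then have "ortho n (Vrow w \<alpha> r n j) c = 0" using c unfolding CC_eq conds_def by auto
  moreover have "ortho n (Vrow w \<alpha> r n j) c = (\<Sum>p<n. c p * xp p ^ j)"
    unfolding ortho_def Vrow_def xp_def by (rule sum.cong) (auto simp: mult.commute)
  ultimately show ?thesis by simp
next
  case True
  then obtain i where i: "j = (r+1) * i" by auto
  have xpj: "xp p ^ j = w ^ ((p div (r+1)) * j)" for p
  proof -
    have "xp p ^ j = (w ^ (p div (r+1))) ^ j * ((\<alpha> ^ (r+1)) ^ i) ^ (p mod (r+1))"
      unfolding xp_def i by (simp only: power_mult_distrib power_mult[symmetric] mult.commute mult.left_commute)
    also have "\<dots> = w ^ ((p div (r+1)) * j)" by (simp only: alpha_pow power_one mult_1_right power_mult)
    finally show ?thesis .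
  qed
  have "(\<Sum>p<n. c p * xp p ^ j) = (\<Sum>b<m+l. \<Sum>p\<in>G b. c p * w ^ ((p div (r+1)) * j))"
    unfolding n_eq xpj G_def by (rule sum_groups)
  also have "\<dots> = (\<Sum>b<m+l. w ^ (b * j) * sum c (G b))"
  proof (rule sum.cong[OF refl])
    fix b
    have "(\<Sum>p\<in>G b. c p * w ^ ((p div (r+1)) * j)) = (\<Sum>p\<in>G b. c p * w ^ (b * j))"
    proof (rule sum.cong[OF refl])
      fix p assume "p \<in> G b"
      then obtain s where ps: "p = b*(r+1) + s" "s \<le> r" by (auto simp: G_def intro: exI[of _ "p - b*(r+1)"] dest: le_Suc_ex)
      have "p div (r+1) = b + s div (r+1)" unfolding ps(1) by (rule div_mult_self3) simp
      moreover have "s div (r+1) = 0" using ps(2) by simp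
      ultimately have "p div (r+1) = b" by simp
      then show "c p * w ^ ((p div (r+1)) * j) = c p * w ^ (b * j)" by simp
    qed
    also have "\<dots> = sum c (G b) * w ^ (b * j)" by (rule sum_distrib_right[symmetric])
    finally show "(\<Sum>p\<in>G b. c p * w ^ ((p div (r+1)) * j)) = w ^ (b * j) * sum c (G b)"
      by (simp only: mult.commute)
  qed
  also have "\<dots> = 0" using grp[OF c] by simp
  finally show ?thesis .
qed

lemma weight:
  assumes c: "c \<in> CC" "c \<noteq> 0"
  shows "t + 2 \<le> hweight n c"
proof (rule ccontr)
  assume "\<not> t + 2 \<le> hweight n c"
  then have "card {p. p < n \<and> c p \<noteq> 0} \<le> t + 1" by (simp add: hweight_def)
  then have "\<forall>p<n. c p = 0" using vandermonde_zero[OF xp_inj pows[OF c(1)]] by blast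
  moreover have "\<forall>p\<ge>n. c p = 0" using c CC_Fn by (auto simp: Fn_def)
  ultimately have "c = 0"
  proof -
    assume a1: "\<forall>p<n. c p = 0" and a2: "\<forall>p\<ge>n. c p = 0"
    show "c = 0"
    proof (rule ext)
      fix x show "c x = 0 x" using a1 a2 by (cases "x < n") auto
    qed
  qed
  then show False using c by simp
qed

lemma Zprop:
  assumes c: "c \<in> CC" and B: "B \<le> n" and v: "\<And>p. p < B \<Longrightarrow> p mod (r+1) \<noteq> r \<Longrightarrow> c p = 0"
  shows "p < B \<Longrightarrow> c p = 0"
proof -
  assume p: "p < B"
  show "c p = 0"
  proof (cases "p mod (r+1) = r")
    case False then show ?thesis using v p by simp
  next
    case True
    define b where "b = p div (r+1)"
    have pb: "p = b*(r+1) + r" using True unfolding b_def by (metis div_mult_mod_eq)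
    have "b < m + l" using p B n_eq unfolding b_def by (simp add: less_mult_imp_div_less)
    have "G b = insert p {b*(r+1)..<b*(r+1)+r}" using pb by (auto simp: G_def)
    moreover have "p \<notin> {b*(r+1)..<b*(r+1)+r}" using pb by simp
    ultimately have "sum c (G b) = c p + (\<Sum>q\<in>{b*(r+1)..<b*(r+1)+r}. c q)" by simp
    also have "(\<Sum>q\<in>{b*(r+1)..<b*(r+1)+r}. c q) = 0"
    proof (rule sum.neutral, rule ballI)
      fix q assume q: "q \<in> {b*(r+1)..<b*(r+1)+r}"
      define s where "s = q - b*(r+1)"
      have qs: "q = b*(r+1) + s" "s < r" using q by (auto simp: s_def)
      have "q mod (r+1) = s" unfolding qs(1) mod_mult_self3 using qs(2) by simp
      moreover have "q < B" using qs pb p by simp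
      ultimately show "c q = 0" using v qs by simp
    qed
    finally show ?thesis using grp[OF c \<open>b < m + l\<close>] by simp
  qed
qed

lemma length_H: "length H = NN"
  using filter_len1[of r l] by (simp add: H_def Hrows_def NN_def)


lemma card_setH: "card (set H) \<le> NN"
  using card_length[of H] length_H by simp

lemma dim_ge: "n \<le> V.dim CC + NN"
proof -
  have "V.dim (Fn n :: (nat \<Rightarrow> 'a) set) \<le> V.dim (Fn n \<inter> conds n (set H)) + card (set H)"
    by (rule L2) (auto intro: Fn_subspace)
  then show ?thesis using dim_Fn[where 'a='a, of n] card_setH CC_eq by simp
qed

lemma hw_le:
  assumes c: "c \<in> CC" and B: "B \<le> n" and z: "\<And>p. p < B \<Longrightarrow> c p = 0"
  shows "hweight n c \<le> n - B"
proof -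
  have "{p. p < n \<and> c p \<noteq> 0} \<subseteq> {B..<n}" using z by (auto simp: not_less[symmetric])
  then have "card {p. p < n \<and> c p \<noteq> 0} \<le> card {B..<n}" by (intro card_mono) auto
  then show ?thesis by (simp add: hweight_def)
qed

lemma dim_le: "V.dim CC \<le> k"
proof -
  define I where "I = {p. p < m*(r+1)+0 \<and> p mod (r+1) \<noteq> r}"
  have cI: "card I \<le> m*r+0" unfolding I_def by (rule card_nonlast) (use r_pos in auto)
  let ?D = "delta ` I :: (nat \<Rightarrow> 'a) set"
  have mn: "m*(r+1) \<le> n" unfolding n_eq by (intro mult_le_mono1) simp
  have "V.dim CC \<le> V.dim (CC \<inter> conds n ?D) + card ?D"
    by (rule L2) (simp_all add: I_def CC_sub CC_Fn)
  moreover have "CC \<inter> conds n ?D \<subseteq> {0}"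
  proof
    fix c assume c: "c \<in> CC \<inter> conds n ?D"
    have v: "c p = 0" if "p < m*(r+1)" "p mod (r+1) \<noteq> r" for p
    proof -
      have "p \<in> I" using that by (simp add: I_def)
      then have "ortho n (delta p) c = 0" using c by (auto simp: conds_def)
      then show ?thesis using ortho_delta[of p n c] that mn by simp
    qed
    have z: "c p = 0" if "p < m*(r+1)" for p
      using Zprop[of c "m*(r+1)" p] c mn v that by blast
    have "hweight n c \<le> n - m*(r+1)" using hw_le[of c "m*(r+1)"] c mn z by blast
    moreover have "n - m*(r+1) = t" by (simp add: n_eq t_def algebra_simps)
    ultimately have "\<not> t + 2 \<le> hweight n c" by simp
    then show "c \<in> {0}" using weight[of c] c by auto
  qed
  then have "V.dim (CC \<inter> conds n ?D) = 0" by (rule dim_zero_set)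
  moreover have "card ?D \<le> card I" by (rule card_image_le) (simp add: I_def)
  ultimately show ?thesis using cI k_eq by simp
qed

lemma dim_CC: "V.dim CC = k" using dim_ge dim_le n_kN by simp

lemma vdimH: "V.dim (set H) = NN"
proof (rule antisym)
  show "V.dim (set H) \<le> NN" using V.dim_le_card'[of "set H"] card_setH by simp
next
  have e1: "erow r n b \<in> Fn n" for b by (simp add: Fn_def erow_def)
  have e2: "Vrow w \<alpha> r n j \<in> Fn n" for j by (simp add: Fn_def Vrow_def)
  have HF: "set H \<subseteq> Fn n"
    unfolding H_def Hrows_def using e1 e2 by auto
  obtain B where B: "B \<subseteq> set H" "V.independent B" "set H \<subseteq> V.span B" "card B = V.dim (set H)" "finite B"
    using dim_le_basis[OF HF] by blast
  have "Fn n \<inter> conds n B \<subseteq> CC"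
  proof
    fix c assume c: "c \<in> Fn n \<inter> conds n B"
    have "V.span B \<subseteq> {h. ortho n h c = 0}"
      using c by (intro V.span_minimal ortho_subspace_h) (auto simp: conds_def)
    then show "c \<in> CC" using c B(3) unfolding CC_eq conds_def by auto
  qed
  then have d1: "V.dim (Fn n \<inter> conds n B) \<le> V.dim CC" using CC_Fn by (rule dim_mono_Fn)
  have "V.dim (Fn n :: (nat \<Rightarrow> 'a) set) \<le> V.dim (Fn n \<inter> conds n B) + card B"
    by (rule L2) (auto intro: Fn_subspace B(5))
  then show "NN \<le> V.dim (set H)" using dim_Fn[where 'a='a, of n] d1 dim_CC n_kN B(4) by simp
qed

lemma exists_wt: "\<exists>c\<in>CC. c \<noteq> 0 \<and> hweight n c \<le> t + 2"
proof -
  define B' where "B' = (m-1)*(r+1) + (r-1)"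
  define I where "I = {p. p < B' \<and> p mod (r+1) \<noteq> r}"
  obtain m' where m': "m = Suc m'" using m_ge by (cases m) auto
  obtain r' where r': "r = Suc r'" using r_pos by (cases r) auto
  have nB: "n = B' + (t + 2)" unfolding B'_def t_def n_eq unfolding m' r' by (simp add: algebra_simps)
  have kk: "(m-1)*r + (r-1) + 1 = k" unfolding k_eq unfolding m' r' by (simp add: algebra_simps)
  have cI: "card I \<le> (m-1)*r + (r-1)" unfolding I_def B'_def by (rule card_nonlast) (use r_pos in auto)
  let ?S = "set H \<union> (delta ` I :: (nat \<Rightarrow> 'a) set)"
  have "card ?S \<le> card (set H) + card (delta ` I :: (nat \<Rightarrow> 'a) set)" by (rule card_Un_le)
  also have "card (delta ` I :: (nat \<Rightarrow> 'a) set) \<le> card I" by (rule card_image_le) (simp add: I_def)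
  finally have cS: "card ?S + 1 \<le> NN + k" using card_setH cI kk by simp
  have "V.dim (Fn n :: (nat \<Rightarrow> 'a) set) \<le> V.dim (Fn n \<inter> conds n ?S) + card ?S"
    by (rule L2) (auto simp: I_def intro: Fn_subspace)
  then have "1 \<le> V.dim (Fn n \<inter> conds n ?S)" using dim_Fn[where 'a='a, of n] cS n_kN by simp
  then have "\<not> (Fn n \<inter> conds n ?S) \<subseteq> {0}"
  proof -
    assume a: "1 \<le> V.dim (Fn n \<inter> conds n ?S)"
    show ?thesis
    proof
      assume "Fn n \<inter> conds n ?S \<subseteq> {0}"
      then have "V.dim (Fn n \<inter> conds n ?S) = 0" by (rule dim_zero_set)
      then show False using a by simp
    qed
  qed
  then obtain c where c: "c \<in> Fn n \<inter> conds n ?S" "c \<noteq> 0" by auto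
  have cC: "c \<in> CC" using c unfolding CC_eq conds_def by auto
  have Bn: "B' \<le> n" using nB by simp
  have v: "c p = 0" if "p < B'" "p mod (r+1) \<noteq> r" for p
  proof -
    have "p \<in> I" using that by (simp add: I_def)
    then have "ortho n (delta p) c = 0" using c by (auto simp: conds_def)
    then show ?thesis using ortho_delta[of p n c] that Bn by simp
  qed
  have z: "c p = 0" if "p < B'" for p
    using Zprop[of c B' p] cC Bn v that by blast
  have "hweight n c \<le> n - B'" using hw_le[of c B'] cC Bn z by blast
  then show ?thesis using cC c(2) nB by auto
qed

lemma min_dist_CC: "min_dist n CC = t + 2"
proof -
  define W where "W = {hweight n c | c. c \<in> CC \<and> c \<noteq> 0}"
  have "W \<subseteq> {..n}"
  proof
    fix x assume "x \<in> W"
    then obtain c :: "nat \<Rightarrow> 'a" where "x = hweight n c" unfolding W_def by blast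
    moreover have "card {i. i < n \<and> c i \<noteq> 0} \<le> card {..<n}" by (intro card_mono) auto
    ultimately show "x \<in> {..n}" by (simp add: hweight_def)
  qed
  then have fW: "finite W" by (rule finite_subset) simp
  have lb: "\<forall>y\<in>W. t + 2 \<le> y" using weight by (auto simp: W_def)
  obtain c where "c \<in> CC" "c \<noteq> 0" "hweight n c \<le> t + 2" using exists_wt by blast
  then have "t + 2 \<in> W" using weight[of c] unfolding W_def by (intro CollectI exI[of _ c]) auto
  then have "Min W = t + 2" using fW lb by (intro Min_eqI) auto
  then show ?thesis by (simp add: min_dist_def W_def)
qed

lemma G_facts:
  assumes i: "i < n"
  shows "i div (r+1) < m + l" "i \<in> G (i div (r+1))" "card (G (i div (r+1))) = r + 1"
proof -
  show "i div (r+1) < m + l" using i n_eq by (simp add: less_mult_imp_div_less)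
  have "i = (i div (r+1))*(r+1) + i mod (r+1)" by (rule div_mult_mod_eq[symmetric])
  moreover have "i mod (r+1) \<le> r" by (simp add: less_Suc_eq_le)
  ultimately show "i \<in> G (i div (r+1))" unfolding G_def
    by (metis atLeastAtMost_iff add_le_mono le_add1 le_refl)
  show "card (G (i div (r+1))) = r + 1" by (simp add: G_def)
qed

lemma repair_sum:
  assumes c: "c \<in> CC" and i: "i < n"
  shows "c i = - (\<Sum>j\<in>G (i div (r+1)) - {i}. c j)"
proof -
  have "sum c (G (i div (r+1))) = c i + (\<Sum>j\<in>G (i div (r+1)) - {i}. c j)"
    using G_facts(2)[OF i] by (simp add: G_def sum.remove)
  then show ?thesis using grp[OF c G_facts(1)[OF i]] by (simp add: eq_neg_iff_add_eq_0)
qed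

lemma main_locale:
  "length H = NN \<and> V.dim (set H) = NN \<and> linear_code n k (n - k - m + 2) CC
   \<and> (\<forall>c\<in>CC. \<forall>b<m+l. (\<Sum>p\<in>{b*(r+1)..b*(r+1)+r}. c p) = 0)
   \<and> addition_based_repair n CC \<and> all_symbol_locality n r CC"
proof (intro conjI)
  show "length H = NN" by (rule length_H)
  show "V.dim (set H) = NN" by (rule vdimH)
  show "linear_code n k (n - k - m + 2) CC"
    unfolding linear_code_def vsubspace_def vdim_def
    using CC_sub CC_Fn dim_CC min_dist_CC t_eq by (auto simp: Fn_def)
  show "\<forall>c\<in>CC. \<forall>b<m+l. (\<Sum>p\<in>{b*(r+1)..b*(r+1)+r}. c p) = 0"
    using grp unfolding G_def by blast
  show "addition_based_repair n CC"
    unfolding addition_based_repair_def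
  proof (intro allI impI)
    fix i assume i: "i < n"
    show "\<exists>J. J \<subseteq> {..<n} - {i} \<and> (\<forall>c\<in>CC. c i = - sum c J)"
      using repair_sum[OF _ i] G_sub[OF G_facts(1)[OF i]]
      by (intro exI[of _ "G (i div (r+1)) - {i}"]) auto
  qed
  show "all_symbol_locality n r CC"
    unfolding all_symbol_locality_def
  proof (intro allI impI)
    fix i assume i: "i < n"
    let ?R = "G (i div (r+1)) - {i}"
    have cR: "card ?R = r" using G_facts[OF i] by (simp add: G_def)
    have "\<forall>c\<in>CC. c i = (\<lambda>v. - (\<Sum>j\<in>?R. v j)) (\<lambda>j. if j \<in> ?R then c j else 0)"
      using repair_sum[OF _ i] by simp
    then show "\<exists>R f. R \<subseteq> {..<n} - {i} \<and> card R \<le> r \<and>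
        (\<forall>c\<in>CC. c i = f (\<lambda>j. if j \<in> R then c j else 0))"
      using G_sub[OF G_facts(1)[OF i]] cR by (intro exI[of _ ?R] exI[of _ "\<lambda>v. - (\<Sum>j\<in>?R. v j)"]) auto
  qed
qed

end

theorem mainTheorem7:
  fixes w :: "'a::{finite,field}" and n k r l :: nat
  assumes "n \<le> CARD('a) - 1"
    and "0 < r" "r < k" "k \<le> n"
    and "r dvd k" "(r+1) dvd n" "(r+1) dvd (CARD('a) - 1)"
    and "n = (k div r + l) * (r+1)"
    and "primitive_elem w"
  defines "m \<equiv> k div r"
    and "\<alpha> \<equiv> w ^ ((CARD('a) - 1) div (r+1))"
  shows "length (Hrows w \<alpha> r n m l) = m + l + l*r
    \<and> vdim (set (Hrows w \<alpha> r n m l)) = m + l + l*r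
    \<and> linear_code n k (n - k - m + 2) (code_of n (Hrows w \<alpha> r n m l))
    \<and> (\<forall>c\<in>code_of n (Hrows w \<alpha> r n m l). \<forall>b<m+l. (\<Sum>p\<in>{b*(r+1)..b*(r+1)+r}. c p) = 0)
    \<and> addition_based_repair n (code_of n (Hrows w \<alpha> r n m l))
    \<and> all_symbol_locality n r (code_of n (Hrows w \<alpha> r n m l))"
  proof -
  interpret L: csetup w n k r l m \<alpha>
    using assms unfolding m_def \<alpha>_def by unfold_locales auto
  show ?thesis
    using L.main_locale unfolding L.H_def L.CC_def L.NN_def vdim_def by simp
qed

end
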